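(* Let $Q\in\mathcal{Q}(n,d,m)$ and $\underline{\delta}\in\Omega_3(Q)$. Then $|\underline{\delta}|\leq m(d-n+1)$.
   Context: A quiver $Q$ is a finite oriented graph; for an arrow $a$, $a''$ is its tail and $a'$ its head. A path $a=a_1\cdots a_s$ ($a_i$ arrows) satisfies $a_i'=a_{i+1}''$; it is closed if $a_1''=a_s'$; $V(a)=\{a_1'',a_1',\dots,a_s'\}$, $A(a)=\{a_1,\dots,a_s\}$. A closed path is primitive if each vertex of $V(a)$ is the head of exactly one $a_i$. $m(Q)$ is the maximal degree of a primitive closed path; $Q$ is strongly connected if some closed path contains all vertices; $\mathcal{Q}(n,d,m)$ is the set of strongly connected quivers with $n$ vertices, $d$ arrows and $m(Q)=m$. The multidegree $\mathrm{mdeg}(a)\in\mathbb{N}^{\#A(Q)}$ of a path $a$ has $b$-component equal to the number of $i$ with $a_i=b$. For $\underline{\delta}\in\mathbb{N}^{\#A(Q)}$, $|\underline{\delta}|=\sum_b\delta_b$. $\Omega_0(Q)$ is the set of $\mathrm{mdeg}(h)$ for closed paths $h$ in $Q$ with $A(h)=A(Q)$. A path $a$ is $\underline{\delta}$-double if it is a primitive closed path and $\delta_{a_i}\geq2$ for all $i$. $\Omega_3(Q)$ is the set of $\underline{\delta}\in\Omega_0(Q)$ such that there is no $\underline{\delta}$-double path in $Q$. *)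

theory Defs
  imports Main
begin

text \<open>A quiver is given by a vertex set V, an arrow set A, and tail/head maps
  (tl_of a = a'', hd_of a = a'). Multiple arrows and loops are allowed.\<close>

definition quiver :: "'v set \<Rightarrow> 'a set \<Rightarrow> ('a \<Rightarrow> 'v) \<Rightarrow> ('a \<Rightarrow> 'v) \<Rightarrow> bool" where
  "quiver V A tl_of hd_of \<longleftrightarrow> finite V \<and> finite A \<and>
     (\<forall>a\<in>A. tl_of a \<in> V \<and> hd_of a \<in> V)"

definition is_path :: "'a set \<Rightarrow> ('a \<Rightarrow> 'v) \<Rightarrow> ('a \<Rightarrow> 'v) \<Rightarrow> 'a list \<Rightarrow> bool" where
  "is_path A tl_of hd_of p \<longleftrightarrow> p \<noteq> [] \<and> set p \<subseteq> A \<and>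
     (\<forall>i. Suc i < length p \<longrightarrow> hd_of (p ! i) = tl_of (p ! Suc i))"

definition closed_path :: "'a set \<Rightarrow> ('a \<Rightarrow> 'v) \<Rightarrow> ('a \<Rightarrow> 'v) \<Rightarrow> 'a list \<Rightarrow> bool" where
  "closed_path A tl_of hd_of p \<longleftrightarrow> is_path A tl_of hd_of p \<and> tl_of (hd p) = hd_of (last p)"

definition path_verts :: "('a \<Rightarrow> 'v) \<Rightarrow> ('a \<Rightarrow> 'v) \<Rightarrow> 'a list \<Rightarrow> 'v set" where
  "path_verts tl_of hd_of p = insert (tl_of (hd p)) (hd_of ` set p)"

definition primitive_closed :: "'a set \<Rightarrow> ('a \<Rightarrow> 'v) \<Rightarrow> ('a \<Rightarrow> 'v) \<Rightarrow> 'a list \<Rightarrow> bool" where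
  "primitive_closed A tl_of hd_of p \<longleftrightarrow> closed_path A tl_of hd_of p \<and>
     (\<forall>v\<in>path_verts tl_of hd_of p. card {i. i < length p \<and> hd_of (p ! i) = v} = 1)"

definition mQ :: "'a set \<Rightarrow> ('a \<Rightarrow> 'v) \<Rightarrow> ('a \<Rightarrow> 'v) \<Rightarrow> nat" where
  "mQ A tl_of hd_of = Max {length p | p. primitive_closed A tl_of hd_of p}"

definition strongly_connected :: "'v set \<Rightarrow> 'a set \<Rightarrow> ('a \<Rightarrow> 'v) \<Rightarrow> ('a \<Rightarrow> 'v) \<Rightarrow> bool" where
  "strongly_connected V A tl_of hd_of \<longleftrightarrow>
     (\<exists>p. closed_path A tl_of hd_of p \<and> V \<subseteq> path_verts tl_of hd_of p)"

definition in_Qndm :: "'v set \<Rightarrow> 'a set \<Rightarrow> ('a \<Rightarrow> 'v) \<Rightarrow> ('a \<Rightarrow> 'v) \<Rightarrow> nat \<Rightarrow> nat \<Rightarrow> nat \<Rightarrow> bool" where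
  "in_Qndm V A tl_of hd_of n d m \<longleftrightarrow> quiver V A tl_of hd_of \<and> strongly_connected V A tl_of hd_of \<and>
     card V = n \<and> card A = d \<and> mQ A tl_of hd_of = m"

definition mdeg :: "'a list \<Rightarrow> 'a \<Rightarrow> nat" where
  "mdeg p = (\<lambda>b. count_list p b)"

definition Omega0 :: "'a set \<Rightarrow> ('a \<Rightarrow> 'v) \<Rightarrow> ('a \<Rightarrow> 'v) \<Rightarrow> ('a \<Rightarrow> nat) set" where
  "Omega0 A tl_of hd_of = {mdeg h | h. closed_path A tl_of hd_of h \<and> set h = A}"

definition delta_double :: "'a set \<Rightarrow> ('a \<Rightarrow> 'v) \<Rightarrow> ('a \<Rightarrow> 'v) \<Rightarrow> ('a \<Rightarrow> nat) \<Rightarrow> 'a list \<Rightarrow> bool" where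
  "delta_double A tl_of hd_of \<delta> p \<longleftrightarrow> primitive_closed A tl_of hd_of p \<and> (\<forall>i<length p. \<delta> (p ! i) \<ge> 2)"

definition Omega3 :: "'a set \<Rightarrow> ('a \<Rightarrow> 'v) \<Rightarrow> ('a \<Rightarrow> 'v) \<Rightarrow> ('a \<Rightarrow> nat) set" where
  "Omega3 A tl_of hd_of = {\<delta> \<in> Omega0 A tl_of hd_of. \<not> (\<exists>p. delta_double A tl_of hd_of \<delta> p)}"

definition delta_abs :: "'a set \<Rightarrow> ('a \<Rightarrow> nat) \<Rightarrow> nat" where
  "delta_abs A \<delta> = (\<Sum>b\<in>A. \<delta> b)"

end

theory Submission
  imports Defs
begin

lemma is_path_succ:
  "is_path A T H p \<longleftrightarrow> p \<noteq> [] \<and> set p \<subseteq> A \<and> successively (\<lambda>a b. H a = T b) p"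
  unfolding is_path_def successively_conv_nth by blast

lemma closed_tl_sub:
  assumes "closed_path A T H p"
  shows "T ` set p \<subseteq> H ` set p"
proof
  fix v assume "v \<in> T ` set p"
  then obtain k where k: "k < length p" "v = T (p ! k)" by (auto simp: in_set_conv_nth)
  show "v \<in> H ` set p"
  proof (cases k)
    case 0
    with assms k have "v = H (last p)"
      by (auto simp: closed_path_def is_path_def hd_conv_nth)
    moreover have "last p \<in> set p" using k using last_in_set[of p] by (cases p) auto
    ultimately show ?thesis by blast
  next
    case (Suc k')
    with assms k have "v = H (p ! k')"
      by (auto simp: closed_path_def is_path_def)
    moreover have "p ! k' \<in> set p" using k Suc by auto
    ultimately show ?thesis by blast
  qed
qed

lemma closed_verts:
  assumes "closed_path A T H p"
  shows "path_verts T H p = H ` set p"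
proof -
  have "p \<noteq> []" using assms by (auto simp: closed_path_def is_path_def)
  hence "hd p \<in> set p" by auto
  thus ?thesis using closed_tl_sub[OF assms] unfolding path_verts_def by auto
qed

lemma prim_len:
  assumes q: "quiver V A T H" and p: "primitive_closed A T H p"
  shows "length p \<le> card V"
proof -
  have cp: "closed_path A T H p" using p by (simp add: primitive_closed_def)
  have inj: "inj_on (\<lambda>i. H (p ! i)) {..<length p}"
  proof (rule inj_onI)
    fix i j assume i: "i \<in> {..<length p}" and j: "j \<in> {..<length p}" and e: "H (p ! i) = H (p ! j)"
    let ?v = "H (p ! i)"
    have "?v \<in> path_verts T H p" using closed_verts[OF cp] i by auto
    hence "card {k. k < length p \<and> H (p ! k) = ?v} = 1" using p by (simp add: primitive_closed_def)
    then obtain z where z: "{k. k < length p \<and> H (p ! k) = ?v} = {z}" using card_1_singletonE by blast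
    have "i \<in> {z}" "j \<in> {z}" using i j e by (auto simp flip: z)
    thus "i = j" by simp
  qed
  have "(\<lambda>i. H (p ! i)) ` {..<length p} \<subseteq> V"
    using q cp by (auto simp: quiver_def closed_path_def is_path_def) (meson nth_mem subsetD)
  hence "card {..<length p} \<le> card V"
    using card_inj_on_le[OF inj] q by (auto simp: quiver_def)
  thus ?thesis by simp
qed

lemma prim_le_mQ:
  assumes q: "quiver V A T H" and p: "primitive_closed A T H p"
  shows "length p \<le> mQ A T H"
proof -
  have "{length p | p. primitive_closed A T H p} \<subseteq> {..card V}"
    using prim_len[OF q] by auto
  hence "finite {length p | p. primitive_closed A T H p}" using finite_subset by blast
  thus ?thesis unfolding mQ_def using p by (intro Max_ge) auto
qed

lemma decomp:
  assumes cp: "closed_path A T H h" and np: "\<not> primitive_closed A T H h"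
  shows "\<exists>c h'. primitive_closed A T H c \<and> closed_path A T H h' \<and>
     (\<forall>x. count_list h x = count_list c x + count_list h' x) \<and>
     length h = length c + length h' \<and> length h' < length h \<and> T (hd c) \<in> H ` set h'"
proof -
  have ph: "h \<noteq> []" "set h \<subseteq> A" "\<And>k. Suc k < length h \<Longrightarrow> H (h ! k) = T (h ! Suc k)"
    "T (hd h) = H (last h)"
    using cp unfolding closed_path_def is_path_def by blast+
  have "\<exists>i j. i < j \<and> j < length h \<and> H (h ! i) = H (h ! j)"
  proof -
    have "\<not> (\<forall>v\<in>path_verts T H h. card {i. i < length h \<and> H (h ! i) = v} = 1)"
      using np cp unfolding primitive_closed_def by blast
    then obtain v where v: "v \<in> path_verts T H h"
      and cv: "card {i. i < length h \<and> H (h ! i) = v} \<noteq> 1" by blast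
    have "v \<in> H ` set h" using v closed_verts[OF cp] by simp
    then obtain x where x: "x \<in> set h" "v = H x" by blast
    then obtain k where k: "k < length h" "v = H (h ! k)" by (metis in_set_conv_nth)
    have "{i. i < length h \<and> H (h ! i) = v} \<noteq> {k}"
    proof
      assume "{i. i < length h \<and> H (h ! i) = v} = {k}"
      hence "card {i. i < length h \<and> H (h ! i) = v} = 1" by simp
      thus False using cv by simp
    qed
    moreover have "k \<in> {i. i < length h \<and> H (h ! i) = v}" using k by simp
    ultimately have "\<exists>k'. k' < length h \<and> H (h ! k') = v \<and> k' \<noteq> k" by auto
    then obtain k' where k': "k' < length h" "H (h ! k') = v" "k' \<noteq> k" by blast
    show ?thesis
    proof (cases "k < k'")
      case True thus ?thesis using k k' by (intro exI[of _ k] exI[of _ k']) auto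
    next
      case False thus ?thesis using k k' by (intro exI[of _ k'] exI[of _ k]) auto
    qed
  qed
  define P where "P g \<longleftrightarrow> (\<exists>i j. i < j \<and> j < length h \<and> H (h ! i) = H (h ! j) \<and> j - i = g)" for g
  have "\<exists>g. P g" using \<open>\<exists>i j. _\<close> unfolding P_def by blast
  hence "P (LEAST g. P g)" by (rule LeastI_ex)
  then obtain i j where ij: "i < j" "j < length h" "H (h ! i) = H (h ! j)"
    and g: "j - i = (LEAST g. P g)" unfolding P_def by blast
  have minimal: "j - i \<le> j' - i'" if "i' < j'" "j' < length h" "H (h ! i') = H (h ! j')" for i' j'
  proof -
    have "P (j' - i')" unfolding P_def using that by blast
    thus ?thesis unfolding g by (rule Least_le)
  qed
  define c where "c = take (j - i) (drop (Suc i) h)"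
  define h' where "h' = take (Suc i) h @ drop (Suc j) h"
  have lc: "length c = j - i" using ij by (simp add: c_def)
  have cn: "c ! k = h ! (Suc i + k)" if "k < j - i" for k
    using that ij by (simp add: c_def)
  have hsplit: "h = take (Suc i) h @ c @ drop (Suc j) h"
  proof -
    have "drop (Suc i) h = c @ drop (j - i) (drop (Suc i) h)" unfolding c_def by (rule append_take_drop_id[symmetric])
    also have "drop (j - i) (drop (Suc i) h) = drop (Suc j) h" using ij by simp
    finally show ?thesis by (metis append_take_drop_id)
  qed
  have cne: "c \<noteq> []" using lc ij by auto
  have cp_c: "closed_path A T H c"
    unfolding closed_path_def is_path_def
  proof (intro conjI allI impI)
    show "c \<noteq> []" by fact
    show "set c \<subseteq> A" using ph(2) unfolding c_def
      by (meson order_trans set_drop_subset set_take_subset)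
    fix k assume "Suc k < length c"
    thus "H (c ! k) = T (c ! Suc k)" using lc cn ph(3)[of "Suc i + k"] ij by auto
  next
    have "hd c = h ! Suc i" using cne cn[of 0] ij by (simp add: hd_conv_nth)
    moreover have "last c = h ! j" using cne cn[of "j - i - 1"] ij lc by (simp add: last_conv_nth)
    ultimately show "T (hd c) = H (last c)" using ph(3)[of i] ij by simp
  qed
  have prim: "primitive_closed A T H c"
    unfolding primitive_closed_def
  proof (intro conjI ballI)
    show "closed_path A T H c" by fact
    fix v assume "v \<in> path_verts T H c"
    then obtain k0 where k0: "k0 < length c" "v = H (c ! k0)"
      by (auto simp: closed_verts[OF cp_c] in_set_conv_nth)
    have uniq: "k = k0" if k: "k < length c" "H (c ! k) = v" for k
      proof (rule ccontr)
        assume ne: "k \<noteq> k0"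
        have e: "H (h ! (Suc i + k)) = H (h ! (Suc i + k0))" using k k0 cn lc by auto
        show False
        proof (cases "k < k0")
          case True
          have "j - i \<le> (Suc i + k0) - (Suc i + k)"
            by (rule minimal) (use True k0 lc ij e in auto)
          thus False using True k0 lc by auto
        next
          case False
          hence "k0 < k" using ne by auto
          have "j - i \<le> (Suc i + k) - (Suc i + k0)"
            by (rule minimal) (use \<open>k0 < k\<close> k lc ij e in auto)
          thus False using \<open>k0 < k\<close> k lc by auto
        qed
      qed
    have "{k. k < length c \<and> H (c ! k) = v} = {k0}"
      using uniq k0 by auto
    thus "card {k. k < length c \<and> H (c ! k) = v} = 1" by simp
  qed
  have succ_h: "successively (\<lambda>a b. H a = T b) h" using cp
    by (simp add: closed_path_def is_path_succ)
  have s1: "successively (\<lambda>a b. H a = T b) (take (Suc i) h)"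
    and s2: "successively (\<lambda>a b. H a = T b) (drop (Suc j) h)"
  proof -
    have "successively (\<lambda>a b. H a = T b) (take (Suc i) h @ drop (Suc i) h)" using succ_h by simp
    thus "successively (\<lambda>a b. H a = T b) (take (Suc i) h)" by (simp only: successively_append_iff)
    have "successively (\<lambda>a b. H a = T b) (take (Suc j) h @ drop (Suc j) h)" using succ_h by simp
    thus "successively (\<lambda>a b. H a = T b) (drop (Suc j) h)" by (simp only: successively_append_iff)
  qed
  have lt: "last (take (Suc i) h) = h ! i" using ij by (subst last_conv_nth) (auto simp: min_def)
  have tne: "take (Suc i) h \<noteq> []" using ph(1) by simp
  have cp_h': "closed_path A T H h'"
    unfolding closed_path_def is_path_succ
  proof (intro conjI)
    show "h' \<noteq> []" using tne by (simp add: h'_def)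
    show "set h' \<subseteq> A" using ph(2) set_drop_subset[of "Suc j" h] set_take_subset[of "Suc i" h]
      unfolding h'_def by auto
    show "successively (\<lambda>a b. H a = T b) h'"
      unfolding h'_def successively_append_iff
    proof (intro conjI s1 s2)
      show "take (Suc i) h = [] \<or> drop (Suc j) h = [] \<or> H (last (take (Suc i) h)) = T (hd (drop (Suc j) h))"
      proof (cases "drop (Suc j) h = []")
        case False
        hence "Suc j < length h" by simp
        hence "hd (drop (Suc j) h) = h ! Suc j" by (simp add: hd_drop_conv_nth)
        thus ?thesis using lt ij ph(3)[of j] \<open>Suc j < length h\<close> by simp
      qed simp
    qed
    have hh: "hd h' = hd h" using tne ph(1) by (cases h) (auto simp: h'_def)
    show "T (hd h') = H (last h')"
    proof (cases "drop (Suc j) h = []")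
      case True
      hence "j = length h - 1" using ij by simp
      hence "last h = h ! j" using ph(1) by (simp add: last_conv_nth)
      thus ?thesis using True hh lt ij ph(4) by (simp add: h'_def)
    next
      case False
      thus ?thesis using hh ph(4) by (simp add: h'_def last_drop)
    qed
  qed
  have cnt: "\<forall>x. count_list h x = count_list c x + count_list h' x"
  proof
    fix x
    have "count_list h x = count_list (take (Suc i) h @ c @ drop (Suc j) h) x"
      using hsplit by (rule arg_cong)
    thus "count_list h x = count_list c x + count_list h' x" by (simp add: h'_def)
  qed
  have len: "length h = length c + length h'"
  proof -
    have "length h = length (take (Suc i) h @ c @ drop (Suc j) h)"
      using hsplit by (rule arg_cong)
    thus ?thesis by (simp add: h'_def)
  qed
  have "T (hd c) = H (h ! i)" using cne cn[of 0] ij ph(3)[of i] by (simp add: hd_conv_nth)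
  moreover have "h ! i \<in> set h'" using ij by (simp add: h'_def in_set_conv_nth) (metis lessI nth_take)
  ultimately have "T (hd c) \<in> H ` set h'" by blast
  thus ?thesis using prim cp_h' cnt len cne by (intro exI[of _ c] exI[of _ h']) auto
qed


lemma key:
  assumes cc: "closed_path A T H c" and ch: "closed_path A T H h'"
    and w: "T (hd c) \<in> H ` set h'" and e: "e \<in> set c" "e \<notin> set h'"
  shows "card (set h') + card (H ` (set c \<union> set h')) + 1 \<le> card (set c \<union> set h') + card (H ` set h')"
proof -
  have pc: "c \<noteq> []" "\<And>k. Suc k < length c \<Longrightarrow> H (c ! k) = T (c ! Suc k)" "T (hd c) = H (last c)"
    using cc unfolding closed_path_def is_path_def by blast+
  define K where "K = {k. k < length c \<and> c ! k \<notin> set h'}"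
  have fK: "finite K" unfolding K_def by simp
  from e obtain k1 where "k1 < length c" "c ! k1 = e" by (metis in_set_conv_nth)
  hence "k1 \<in> K" using e unfolding K_def by simp
  hence Kne: "K \<noteq> {}" by blast
  define km where "km = Max K"
  have kmK: "km \<in> K" unfolding km_def using fK Kne by (rule Max_in)
  have kmax: "k \<le> km" if "k \<in> K" for k unfolding km_def using fK that by (rule Max_ge)
  define f where "f = c ! km"
  have fc: "f \<in> set c" "f \<notin> set h'" using kmK unfolding K_def f_def by auto
  have fh: "H f \<in> H ` set h'"
  proof (cases "Suc km < length c")
    case True
    have "Suc km \<notin> K" using kmax[of "Suc km"] by auto
    hence "c ! Suc km \<in> set h'" using True unfolding K_def by auto
    moreover have "H f = T (c ! Suc km)" using pc(2)[OF True] unfolding f_def .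
    ultimately show ?thesis using closed_tl_sub[OF ch] by blast
  next
    case False
    hence "km = length c - 1" using kmK unfolding K_def by auto
    hence "f = last c" using pc(1) unfolding f_def by (simp add: last_conv_nth)
    thus ?thesis using w pc(3) by simp
  qed
  let ?C = "set c" and ?S = "set h'"
  have sub: "H ` (?C \<union> ?S) \<subseteq> H ` ?S \<union> H ` (?C - ?S - {f})"
  proof
    fix v assume "v \<in> H ` (?C \<union> ?S)"
    then obtain g where g: "g \<in> ?C \<union> ?S" "v = H g" by blast
    show "v \<in> H ` ?S \<union> H ` (?C - ?S - {f})"
    proof (cases "g \<in> ?S \<or> g = f")
      case True thus ?thesis using g fh by auto
    next
      case False thus ?thesis using g by auto
    qed
  qed
  have "card (H ` (?C \<union> ?S)) \<le> card (H ` ?S \<union> H ` (?C - ?S - {f}))"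
    by (rule card_mono) (auto simp: sub)
  also have "\<dots> \<le> card (H ` ?S) + card (H ` (?C - ?S - {f}))" by (rule card_Un_le)
  also have "\<dots> \<le> card (H ` ?S) + card (?C - ?S - {f})" using card_image_le[of "?C - ?S - {f}" H] by simp
  also have "card (?C - ?S - {f}) = card (?C - ?S) - 1" using fc by (simp add: card_Diff_singleton)
  finally have a: "card (H ` (?C \<union> ?S)) \<le> card (H ` ?S) + (card (?C - ?S) - 1)" .
  have "card (?C - ?S) \<ge> 1" using fc by (metis Diff_iff List.finite_set One_nat_def Suc_leI card_gt_0_iff empty_iff finite_Diff)
  moreover have "card (?C \<union> ?S) = card ?S + card (?C - ?S)"
  proof -
    have "?C \<union> ?S = ?S \<union> (?C - ?S)" by blast
    moreover have "card (?S \<union> (?C - ?S)) = card ?S + card (?C - ?S)"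
      by (rule card_Un_disjoint) auto
    ultimately show ?thesis by simp
  qed
  ultimately show ?thesis using a by linarith
qed

lemma main_ind:
  assumes q: "quiver V A T H"
  shows "closed_path A T H h \<Longrightarrow> (\<forall>p. primitive_closed A T H p \<longrightarrow> (\<exists>x\<in>set p. count_list h x < 2))
    \<Longrightarrow> length h + mQ A T H * card (H ` set h) \<le> mQ A T H * (card (set h) + 1)"
proof (induction "length h" arbitrary: h rule: less_induct)
  case less
  let ?m = "mQ A T H"
  show ?case
  proof (cases "primitive_closed A T H h")
    case True
    have "length h \<le> ?m" using prim_le_mQ[OF q True] .
    moreover have "?m * card (H ` set h) \<le> ?m * card (set h)"
      using card_image_le[of "set h" H] by (intro mult_le_mono2) simp
    moreover have "?m * (card (set h) + 1) = ?m * card (set h) + ?m" by simp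
    ultimately show ?thesis by linarith
  next
    case False
    from decomp[OF less.prems(1) False] obtain c h' where
      pc: "primitive_closed A T H c" and ch: "closed_path A T H h'"
      and cnt: "\<forall>x. count_list h x = count_list c x + count_list h' x"
      and len: "length h = length c + length h'" and lt: "length h' < length h"
      and w: "T (hd c) \<in> H ` set h'" by blast
    have hyp': "\<forall>p. primitive_closed A T H p \<longrightarrow> (\<exists>x\<in>set p. count_list h' x < 2)"
    proof (intro allI impI)
      fix p assume "primitive_closed A T H p"
      then obtain x where "x \<in> set p" "count_list h x < 2" using less.prems(2) by blast
      thus "\<exists>x\<in>set p. count_list h' x < 2" using cnt[rule_format, of x] by (intro bexI[of _ x]) auto
    qed
    have IH: "length h' + ?m * card (H ` set h') \<le> ?m * (card (set h') + 1)"
      using less.hyps[OF lt ch hyp'] .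
    obtain e where e: "e \<in> set c" "count_list h e < 2" using less.prems(2) pc by blast
    have "count_list c e \<noteq> 0" using e(1) by (simp add: count_list_0_iff)
    hence "count_list h' e = 0" using e(2) cnt[rule_format, of e] by linarith
    hence e2: "e \<notin> set h'" by (simp add: count_list_0_iff)
    have cc: "closed_path A T H c" using pc by (simp add: primitive_closed_def)
    have seth: "set h = set c \<union> set h'"
    proof -
      have "x \<in> set h \<longleftrightarrow> x \<in> set c \<or> x \<in> set h'" for x
        using cnt[rule_format, of x] count_list_0_iff[of h x] count_list_0_iff[of c x] count_list_0_iff[of h' x]
        by auto
      thus ?thesis by blast
    qed
    have k: "card (set h') + card (H ` set h) + 1 \<le> card (set h) + card (H ` set h')"
      using key[OF cc ch w e(1) e2] unfolding seth .
    have km: "?m * (card (set h') + card (H ` set h) + 1) \<le> ?m * (card (set h) + card (H ` set h'))"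
      using k by (rule mult_le_mono2)
    have lc: "length c \<le> ?m" using prim_le_mQ[OF q pc] .
    show ?thesis using km IH lc len by (simp add: algebra_simps)
  qed
qed

theorem lemma3p4:
  fixes V :: "'v set" and A :: "'a set" and tl_of hd_of :: "'a \<Rightarrow> 'v"
    and n d m :: nat and \<delta> :: "'a \<Rightarrow> nat"
  assumes "in_Qndm V A tl_of hd_of n d m"
    and "\<delta> \<in> Omega3 A tl_of hd_of"
  shows "int (delta_abs A \<delta>) \<le> int m * (int d - int n + 1)"
proof -
  have q: "quiver V A tl_of hd_of" and sc: "strongly_connected V A tl_of hd_of"
    and n: "card V = n" and d: "card A = d" and m: "mQ A tl_of hd_of = m"
    using assms(1) unfolding in_Qndm_def by auto
  from assms(2) obtain h where hc: "closed_path A tl_of hd_of h" and hA: "set h = A"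
    and hd: "\<delta> = mdeg h" and nd: "\<not> (\<exists>p. delta_double A tl_of hd_of \<delta> p)"
    unfolding Omega3_def Omega0_def by blast
  have hyp: "\<forall>p. primitive_closed A tl_of hd_of p \<longrightarrow> (\<exists>x\<in>set p. count_list h x < 2)"
  proof (intro allI impI)
    fix p assume pp: "primitive_closed A tl_of hd_of p"
    then obtain i where "i < length p" "\<not> \<delta> (p ! i) \<ge> 2"
      using nd unfolding delta_double_def by blast
    thus "\<exists>x\<in>set p. count_list h x < 2" unfolding hd mdeg_def by (intro bexI[of _ "p ! i"]) auto
  qed
  have mi: "length h + m * card (hd_of ` A) \<le> m * (card A + 1)"
    using main_ind[OF q hc hyp] unfolding m hA .
  have VA: "hd_of ` A = V"
  proof
    show "hd_of ` A \<subseteq> V" using q unfolding quiver_def by auto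
    from sc obtain p where pc: "closed_path A tl_of hd_of p" and Vp: "V \<subseteq> path_verts tl_of hd_of p"
      unfolding strongly_connected_def by blast
    have "set p \<subseteq> A" using pc unfolding closed_path_def is_path_def by blast
    thus "V \<subseteq> hd_of ` A" using Vp closed_verts[OF pc] by blast
  qed
  have fA: "finite A" using q unfolding quiver_def by blast
  have da: "delta_abs A \<delta> = length h"
    unfolding delta_abs_def hd mdeg_def using sum_count_set[of h A] hA fA by simp
  have "int (length h) + int m * int n \<le> int m * (int d + 1)"
    using mi unfolding VA n d by (metis of_nat_add of_nat_le_iff of_nat_mult of_nat_1)
  thus ?thesis unfolding da by (simp add: algebra_simps)
qed

end
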